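(* Let $\alpha_1\in\mathbb{R}$ with $\sin\alpha_1\neq 0$, and consider the system on the cylinder $\{(\theta,\tilde\rho):\theta\in\mathbb{R}/2\pi\mathbb{Z},\ \tilde\rho>0\}$ \[ \theta' = \frac{1}{\tilde\rho}\bigl(1+\sin\theta\bigr)-2\sin\alpha_1,\qquad \tilde\rho' = -\cos\theta . \] Then every solution trajectory of this system (a) has the conserved quantity $E(\theta,\tilde\rho)=\tilde\rho\,(1+\sin\theta)-\tilde\rho^{2}\sin\alpha_1$, and (b) is a periodic orbit.
   Context: This planar system describes the relative state of a single "branch" agent that pursues agent 1 of a cycle of constant-bearing pursuit agents moving on a circling equilibrium, when the branch agent uses constant-bearing angle $\pi/2$; $\theta=\theta_{1n}$ is an angle (taken modulo $2\pi$), $\tilde\rho=\tilde\rho_{n1}$ a normalized distance, and the prime denotes differentiation with respect to a rescaled time $\tau$. *)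

theory Defs
  imports Complex_Main
begin

text \<open>A solution trajectory of the branch-agent system on the cylinder, with theta
  represented by a real lift (angle modulo 2 pi) and rho > 0, defined for all times tau.\<close>
definition branch_solution :: "real \<Rightarrow> (real \<Rightarrow> real) \<Rightarrow> (real \<Rightarrow> real) \<Rightarrow> bool" where
  "branch_solution \<alpha> \<theta> \<rho> \<longleftrightarrow>
     (\<forall>t. \<rho> t > 0) \<and>
     (\<forall>t. (\<theta> has_real_derivative ((1 + sin (\<theta> t)) / \<rho> t - 2 * sin \<alpha>)) (at t)) \<and>
     (\<forall>t. (\<rho> has_real_derivative (- cos (\<theta> t))) (at t))"

definition branch_energy :: "real \<Rightarrow> real \<Rightarrow> real \<Rightarrow> real" where
  "branch_energy \<alpha> th r = r * (1 + sin th) - r\<^sup>2 * sin \<alpha>"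

text \<open>Periodic orbit on the cylinder R/2piZ x (0,oo): after some period T > 0 the
  state returns, theta up to a multiple of 2 pi (equilibria count as well).\<close>
definition periodic_on_cylinder :: "(real \<Rightarrow> real) \<Rightarrow> (real \<Rightarrow> real) \<Rightarrow> bool" where
  "periodic_on_cylinder \<theta> \<rho> \<longleftrightarrow>
     (\<exists>T>0. \<exists>k::int. \<forall>t. \<rho> (t + T) = \<rho> t \<and> \<theta> (t + T) = \<theta> t + 2 * pi * of_int k)"

end

theory Submission
  imports Defs
begin


lemma sol_D:
  assumes "branch_solution a th r"
  shows "r t > 0"
    "(th has_real_derivative ((1 + sin (th t)) / r t - 2 * sin a)) (at t)"
    "(r has_real_derivative (- cos (th t))) (at t)"
  using assms unfolding branch_solution_def by auto

lemma sol_cont: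
  assumes "branch_solution a th r"
  shows "continuous_on S th" "continuous_on S r"
  using sol_D[OF assms] by (meson DERIV_isCont continuous_at_imp_continuous_on)+

lemma energy_const:
  assumes "branch_solution a th r"
  shows "branch_energy a (th t) (r t) = branch_energy a (th 0) (r 0)"
proof -
  have "DERIV (\<lambda>t. branch_energy a (th t) (r t)) x :> 0" for x
  proof -
    have rp: "r x > 0" using sol_D(1)[OF assms] .
    have "DERIV (\<lambda>t. r t * (1 + sin (th t)) - (r t)^2 * sin a) x :> 0"
      apply (rule derivative_eq_intros sol_D[OF assms] refl)+
      using rp by (simp add: field_simps)
    then show ?thesis unfolding branch_energy_def by simp
  qed
  then show ?thesis by (metis DERIV_isconst_all)
qed

lemma sc_shift: "sin (x - 2*pi*of_int k) = sin x \<and> cos (x - 2*pi*of_int k) = cos x"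
  by (subst sin_cos_eq_iff) (rule exI[of _ "-k"], simp)

lemma sol_shift:
  assumes "branch_solution a th r"
  shows "branch_solution a (\<lambda>t. th (t + T) - 2 * pi * of_int k) (\<lambda>t. r (t + T))"
  unfolding branch_solution_def
proof (intro conjI allI)
  fix t
  show "r (t + T) > 0" using sol_D(1)[OF assms] .
  have "((\<lambda>t. th (t + T)) has_real_derivative ((1 + sin (th (t+T))) / r (t+T) - 2 * sin a)) (at t)"
    using sol_D(2)[OF assms, of "t+T"] DERIV_shift by blast
  then have "((\<lambda>t. th (t + T) - 2 * pi * of_int k) has_real_derivative ((1 + sin (th (t+T))) / r (t+T) - 2 * sin a) - 0) (at t)"
    by (intro derivative_intros)
  then show "((\<lambda>t. th (t + T) - 2 * pi * of_int k) has_real_derivative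
      (1 + sin (th (t + T) - 2 * pi * of_int k)) / r (t + T) - 2 * sin a) (at t)"
    using sc_shift by simp
  have "((\<lambda>t. r (t + T)) has_real_derivative (- cos (th (t+T)))) (at t)"
    using sol_D(3)[OF assms, of "t+T"] DERIV_shift by blast
  then show "((\<lambda>t. r (t + T)) has_real_derivative - cos (th (t + T) - 2 * pi * of_int k)) (at t)"
    using sc_shift by simp
qed



lemma sin_lip: "\<bar>sin x - sin y\<bar> \<le> \<bar>x - y\<bar>" for x y :: real
proof -
  have "\<bar>sin x - sin y\<bar> = 2 * \<bar>sin ((x - y) / 2)\<bar> * \<bar>cos ((x + y) / 2)\<bar>"
    by (simp add: sin_diff_sin abs_mult)
  also have "\<dots> \<le> 2 * \<bar>(x - y) / 2\<bar> * 1"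
    by (intro mult_mono abs_sin_x_le_abs_x) auto
  finally show ?thesis by simp
qed

lemma cos_lip: "\<bar>cos x - cos y\<bar> \<le> \<bar>x - y\<bar>" for x y :: real
proof -
  have "\<bar>cos x - cos y\<bar> = 2 * \<bar>sin ((x + y) / 2)\<bar> * \<bar>sin ((y - x) / 2)\<bar>"
    by (simp add: cos_diff_cos abs_mult)
  also have "\<dots> \<le> 2 * 1 * \<bar>(y - x) / 2\<bar>"
    by (intro mult_mono abs_sin_x_le_abs_x) auto
  finally show ?thesis by simp
qed

lemma arith1: fixes a b D U :: real assumes "U \<le> 2*a*(a*D + 2*b*D^2) + 2*b*a" "a \<ge> 0" "b\<ge>0" "D \<ge>0"
  shows "U \<le> (2*D+2*D^2+1)*(a^2+b^2)"
proof -
  have ab: "2*a*b \<le> a^2+b^2" using sum_squares_ge_zero[of "a-b" 0] by (simp add: power2_eq_square algebra_simps)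
  have "D^2*(2*a*b) \<le> D^2*(a^2+b^2)" using ab by (intro mult_left_mono) auto
  moreover have "0 \<le> D*b^2" using assms by simp
  ultimately show ?thesis using assms(1) ab by (simp add: algebra_simps power2_eq_square)
qed

lemma uniq:
  assumes s1: "branch_solution a th1 r1" and s2: "branch_solution a th2 r2"
    and e1: "th1 t0 = th2 t0" and e2: "r1 t0 = r2 t0"
  shows "th1 t = th2 t \<and> r1 t = r2 t"
proof -
  define lo where "lo = min t0 t"
  define hi where "hi = max t0 t"
  have lh: "lo \<le> hi" by (simp add: lo_def hi_def)
  obtain x1 where x1: "\<forall>y\<in>{lo..hi}. r1 x1 \<le> r1 y"
    using continuous_attains_inf[of "{lo..hi}" r1] sol_cont(2)[OF s1] lh by auto
  obtain x2 where x2: "\<forall>y\<in>{lo..hi}. r2 x2 \<le> r2 y"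
    using continuous_attains_inf[of "{lo..hi}" r2] sol_cont(2)[OF s2] lh by auto
  define d where "d = min (r1 x1) (r2 x2)"
  have dpos: "d > 0" using sol_D(1)[OF s1] sol_D(1)[OF s2] by (simp add: d_def)
  have rb: "d \<le> r1 y" "d \<le> r2 y" if "y \<in> {lo..hi}" for y
    using x1 x2 that unfolding d_def by (meson min.coboundedI1 min.coboundedI2)+
  define D where "D = 1/d"
  have Dpos: "D > 0" using dpos by (simp add: D_def)
  define C where "C = 2*D + 2*D^2 + 1"
  define u where "u = (\<lambda>t. (th1 t - th2 t)^2 + (r1 t - r2 t)^2)"
  define u' where "u' = (\<lambda>t. 2*(th1 t - th2 t)*(((1 + sin (th1 t)) / r1 t - 2 * sin a) - ((1 + sin (th2 t)) / r2 t - 2 * sin a))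
       + 2*(r1 t - r2 t)*(- cos (th1 t) - - cos (th2 t)))"
  have du: "DERIV u y :> u' y" for y
    unfolding u_def u'_def
    apply (rule derivative_eq_intros sol_D[OF s1] sol_D[OF s2] refl)+
    using sol_D(1)[OF s1, of y] sol_D(1)[OF s2, of y] by (simp add: field_simps)
  have bnd: "\<bar>u' y\<bar> \<le> C * u y" if yin: "y \<in> {lo..hi}" for y
  proof -
    define A where "A = th1 y - th2 y"
    define B where "B = r1 y - r2 y"
    have p1: "r1 y > 0" "r2 y > 0" using sol_D(1)[OF s1] sol_D(1)[OF s2] by auto
    have i1: "1 / r1 y \<le> D" using rb(1)[OF yin] dpos p1 unfolding D_def
      by (simp add: frac_le)
    have i12: "1 / (r1 y * r2 y) \<le> D^2" using rb[OF yin] dpos p1 unfolding D_def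
      by (simp add: frac_le mult_mono power2_eq_square)
    have "((1 + sin (th1 y)) / r1 y - 2 * sin a) - ((1 + sin (th2 y)) / r2 y - 2 * sin a)
        = (sin (th1 y) - sin (th2 y)) * (1 / r1 y) + (1 + sin (th2 y)) * (- B) * (1 / (r1 y * r2 y))"
      using p1 by (simp add: B_def field_simps)
    also have "\<bar>\<dots>\<bar> \<le> \<bar>A\<bar> * D + 2 * \<bar>B\<bar> * D^2"
    proof -
      have "\<bar>(sin (th1 y) - sin (th2 y)) * (1 / r1 y)\<bar> \<le> \<bar>A\<bar> * D"
        unfolding abs_mult A_def using i1 p1 sin_lip[of "th1 y" "th2 y"]
        by (intro mult_mono) auto
      moreover have "\<bar>(1 + sin (th2 y)) * (- B) * (1 / (r1 y * r2 y))\<bar> \<le> 2 * \<bar>B\<bar> * D^2"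
      proof -
        have "\<bar>1 + sin (th2 y)\<bar> \<le> 2" using abs_sin_le_one[of "th2 y"] by linarith
        then show ?thesis unfolding abs_mult using i12 p1
          by (intro mult_mono) auto
      qed
      ultimately show ?thesis by linarith
    qed
    finally have X: "\<bar>((1 + sin (th1 y)) / r1 y - 2 * sin a) - ((1 + sin (th2 y)) / r2 y - 2 * sin a)\<bar>
       \<le> \<bar>A\<bar> * D + 2 * \<bar>B\<bar> * D^2" .
    have Y: "\<bar>- cos (th1 y) - - cos (th2 y)\<bar> \<le> \<bar>A\<bar>"
      using cos_lip[of "th2 y" "th1 y"] by (simp add: A_def abs_minus_commute)
    have "\<bar>u' y\<bar> \<le> 2 * \<bar>A\<bar> * (\<bar>A\<bar> * D + 2 * \<bar>B\<bar> * D^2) + 2 * \<bar>B\<bar> * \<bar>A\<bar>"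
    proof -
      have "\<bar>u' y\<bar> \<le> 2 * \<bar>A\<bar> * \<bar>((1 + sin (th1 y)) / r1 y - 2 * sin a) - ((1 + sin (th2 y)) / r2 y - 2 * sin a)\<bar>
          + 2 * \<bar>B\<bar> * \<bar>- cos (th1 y) - - cos (th2 y)\<bar>"
      proof -
        have "u' y = 2 * A * (((1 + sin (th1 y)) / r1 y - 2 * sin a) - ((1 + sin (th2 y)) / r2 y - 2 * sin a))
          + 2 * B * (- cos (th1 y) - - cos (th2 y))" unfolding u'_def A_def B_def by simp
        then show ?thesis by (simp only: abs_mult[symmetric]) (metis abs_triangle_ineq abs_mult abs_numeral)
      qed
      also have "\<dots> \<le> 2 * \<bar>A\<bar> * (\<bar>A\<bar> * D + 2 * \<bar>B\<bar> * D^2) + 2 * \<bar>B\<bar> * \<bar>A\<bar>"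
        using X Y by (intro add_mono mult_left_mono) auto
      finally show ?thesis .
    qed
    moreover have "u y = \<bar>A\<bar>^2 + \<bar>B\<bar>^2" by (simp add: u_def A_def B_def)
    ultimately show ?thesis unfolding C_def using Dpos arith1[of "\<bar>u' y\<bar>" "\<bar>A\<bar>" D "\<bar>B\<bar>"] by auto
  qed
  have unn: "u y \<ge> 0" for y by (simp add: u_def)
  have u0: "u t0 = 0" by (simp add: u_def e1 e2)
  have "u t = 0"
  proof (cases "t0 \<le> t")
    case True
    have "u t * exp (- C * t) \<le> u t0 * exp (- C * t0)"
    proof (rule DERIV_nonpos_imp_nonincreasing[OF True])
      fix x assume x: "t0 \<le> x" "x \<le> t"
      then have xin: "x \<in> {lo..hi}" by (auto simp: lo_def hi_def)
      have "DERIV (\<lambda>y. u y * exp (- C * y)) x :> u' x * exp (- C * x) + u x * (exp (- C * x) * (- C))"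
        by (rule derivative_eq_intros du refl)+ simp
      moreover have "u' x * exp (- C * x) + u x * (exp (- C * x) * (- C)) = (u' x - C * u x) * exp (- C * x)"
        by (simp add: algebra_simps)
      moreover have "(u' x - C * u x) * exp (- C * x) \<le> 0"
        using bnd[OF xin] by (intro mult_nonpos_nonneg) auto
      ultimately show "\<exists>y. DERIV (\<lambda>y. u y * exp (- C * y)) x :> y \<and> y \<le> 0" by auto
    qed
    then have "u t * exp (- C * t) \<le> 0" using u0 by simp
    then show ?thesis using unn[of t] by (simp add: mult_le_0_iff)
  next
    case False
    then have le: "t \<le> t0" by simp
    have "u t * exp (C * t) \<le> u t0 * exp (C * t0)"
    proof (rule DERIV_nonneg_imp_nondecreasing[OF le])
      fix x assume x: "t \<le> x" "x \<le> t0"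
      then have xin: "x \<in> {lo..hi}" by (auto simp: lo_def hi_def)
      have "DERIV (\<lambda>y. u y * exp (C * y)) x :> u' x * exp (C * x) + u x * (exp (C * x) * C)"
        by (rule derivative_eq_intros du refl)+ simp
      moreover have "u' x * exp (C * x) + u x * (exp (C * x) * C) = (u' x + C * u x) * exp (C * x)"
        by (simp add: algebra_simps)
      moreover have "(u' x + C * u x) * exp (C * x) \<ge> 0"
        using bnd[OF xin] by (intro mult_nonneg_nonneg) auto
      ultimately show "\<exists>y. DERIV (\<lambda>y. u y * exp (C * y)) x :> y \<and> y \<ge> 0" by auto
    qed
    then have "u t * exp (C * t) \<le> 0" using u0 by simp
    then show ?thesis using unn[of t] by (simp add: mult_le_0_iff)
  qed
  then show ?thesis unfolding u_def by (simp add: sum_power2_eq_zero_iff)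
qed

lemma return_periodic:
  assumes sol: "branch_solution a th r" and T: "T > 0"
    and e1: "th (t0 + T) = th t0 + 2 * pi * of_int k" and e2: "r (t0 + T) = r t0"
  shows "periodic_on_cylinder th r"
proof -
  have s2: "branch_solution a (\<lambda>t. th (t + T) - 2 * pi * of_int k) (\<lambda>t. r (t + T))"
    by (rule sol_shift[OF sol])
  have "th (t + T) - 2 * pi * of_int k = th t \<and> r (t + T) = r t" for t
    using uniq[OF s2 sol, of t0 t] e1 e2 by (simp add: add.commute)
  then show ?thesis unfolding periodic_on_cylinder_def using T
    by (intro exI[of _ T] conjI exI[of _ k]) (auto simp: algebra_simps)
qed



lemma slope_ge:
  fixes f f' :: "real \<Rightarrow> real"
  assumes "a \<le> x" "\<And>t. a \<le> t \<Longrightarrow> t \<le> x \<Longrightarrow> DERIV f t :> f' t"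
    "\<And>t. a \<le> t \<Longrightarrow> t \<le> x \<Longrightarrow> k \<le> f' t"
  shows "f a + k * (x - a) \<le> f x"
proof -
  have "f a - k * a \<le> f x - k * x"
  proof (rule DERIV_nonneg_imp_nondecreasing[OF assms(1)])
    fix t assume t: "a \<le> t" "t \<le> x"
    have "DERIV (\<lambda>t. f t - k * t) t :> f' t - k"
      using DERIV_diff[OF assms(2)[OF t] DERIV_cmult_Id[of k]] by simp
    then show "\<exists>y. DERIV (\<lambda>t. f t - k * t) t :> y \<and> 0 \<le> y" using assms(3)[OF t] by force
  qed
  then show ?thesis by (simp add: algebra_simps)
qed

lemma slope_le:
  fixes f f' :: "real \<Rightarrow> real"
  assumes "a \<le> x" "\<And>t. a \<le> t \<Longrightarrow> t \<le> x \<Longrightarrow> DERIV f t :> f' t"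
    "\<And>t. a \<le> t \<Longrightarrow> t \<le> x \<Longrightarrow> f' t \<le> k"
  shows "f x \<le> f a + k * (x - a)"
proof -
  have "f x - k * x \<le> f a - k * a"
  proof (rule DERIV_nonpos_imp_nonincreasing[OF assms(1)])
    fix t assume t: "a \<le> t" "t \<le> x"
    have "DERIV (\<lambda>t. f t - k * t) t :> f' t - k"
      using DERIV_diff[OF assms(2)[OF t] DERIV_cmult_Id[of k]] by simp
    then show "\<exists>y. DERIV (\<lambda>t. f t - k * t) t :> y \<and> y \<le> 0" using assms(3)[OF t] by force
  qed
  then show ?thesis by (simp add: algebra_simps)
qed

lemma ivt_any:
  fixes f :: "real \<Rightarrow> real"
  assumes c: "continuous_on UNIV f" and y: "(f a \<le> y \<and> y \<le> f b) \<or> (f b \<le> y \<and> y \<le> f a)"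
  shows "\<exists>x. f x = y"
proof (cases "a \<le> b")
  case True
  have cc: "continuous_on {a..b} f" using c by (rule continuous_on_subset) auto
  from y show ?thesis using IVT'[OF _ _ True cc] IVT2'[OF _ _ True cc] by blast
next
  case False
  then have ba: "b \<le> a" by simp
  have cc: "continuous_on {b..a} f" using c by (rule continuous_on_subset) auto
  from y show ?thesis using IVT'[OF _ _ ba cc] IVT2'[OF _ _ ba cc] by blast
qed

lemma sol_En:
  assumes "branch_solution a th r"
  shows "r t * (1 + sin (th t)) - (r t)^2 * sin a = branch_energy a (th 0) (r 0)"
  using energy_const[OF assms, of t] by (simp add: branch_energy_def)

lemma dth_E:
  fixes r S s E :: real
  assumes "r > 0" "r * (1 + S) - r^2 * s = E"
  shows "(1 + S) / r - 2 * s = E / r^2 - s"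
  using assms by (simp add: field_simps power2_eq_square)

lemma case_neg:
  assumes sol: "branch_solution a th r" and s: "sin a < 0"
  shows "periodic_on_cylinder th r"
proof -
  define s where "s = sin a"
  define E where "E = branch_energy a (th 0) (r 0)"
  have En: "r t * (1 + sin (th t)) - (r t)^2 * s = E" for t using sol_En[OF sol] by (simp add: s_def E_def)
  define X where "X = - pi / s"
  have sn: "s < 0" using s by (simp add: s_def)
  have Xp: "X > 0" using sn pi_gt_zero by (simp add: X_def divide_pos_neg)
  have "th 0 + (- 2 * s) * (X - 0) \<le> th X"
  proof (rule slope_ge)
    show "0 \<le> X" using Xp by simp
    fix t
    show "DERIV th t :> (1 + sin (th t)) / r t - 2 * sin a" by (rule sol_D(2)[OF sol])
    have "1 + sin (th t) \<ge> 0" using sin_ge_minus_one[of "th t"] by linarith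
    then have "(1 + sin (th t)) / r t \<ge> 0" using sol_D(1)[OF sol, of t]
      by (intro divide_nonneg_pos) auto
    then show "- 2 * s \<le> (1 + sin (th t)) / r t - 2 * sin a" by (simp add: s_def)
  qed
  moreover have "(- 2 * s) * (X - 0) = 2 * pi" using sn by (simp add: X_def)
  ultimately have thX: "th 0 + 2 * pi \<le> th X" by linarith
  obtain T where T: "0 \<le> T" "T \<le> X" "th T = th 0 + 2 * pi"
    using IVT'[of th 0 "th 0 + 2*pi" X] thX Xp sol_cont(1)[OF sol] by auto
  have Tp: "T > 0" using T pi_gt_zero by (cases "T = 0") auto
  have sT: "sin (th T) = sin (th 0)" using T(3) by simp
  have "r T * (1 + sin (th 0)) - (r T)^2 * s = r 0 * (1 + sin (th 0)) - (r 0)^2 * s"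
    using En[of T] En[of 0] sT by simp
  then have "(r T - r 0) * (1 + sin (th 0) - s * (r T + r 0)) = 0"
    by (simp add: algebra_simps power2_eq_square)
  moreover have "1 + sin (th 0) - s * (r T + r 0) > 0"
  proof -
    have "s * (r T + r 0) < 0" using sn sol_D(1)[OF sol, of T] sol_D(1)[OF sol, of 0]
      by (simp add: mult_neg_pos)
    moreover have "1 + sin (th 0) \<ge> 0" using sin_ge_minus_one[of "th 0"] by linarith
    ultimately show ?thesis by linarith
  qed
  ultimately have "r T = r 0" by simp
  then show ?thesis using return_periodic[OF sol Tp, of 0 1] T(3) by simp
qed

lemma case_pos_nonpos:
  assumes sol: "branch_solution a th r" and s: "sin a > 0"
    and Eneg: "branch_energy a (th 0) (r 0) \<le> 0"
  shows "periodic_on_cylinder th r"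
proof -
  define s where "s = sin a"
  define E where "E = branch_energy a (th 0) (r 0)"
  have En: "r t * (1 + sin (th t)) - (r t)^2 * s = E" for t using sol_En[OF sol] by (simp add: s_def E_def)
  have sp: "s > 0" using s by (simp add: s_def)
  have En0: "E \<le> 0" using Eneg by (simp add: E_def)
  define X where "X = 2 * pi / s"
  have Xp: "X > 0" using sp pi_gt_zero by (simp add: X_def)
  have "th X \<le> th 0 + (- s) * (X - 0)"
  proof (rule slope_le)
    show "0 \<le> X" using Xp by simp
    fix t
    show "DERIV th t :> (1 + sin (th t)) / r t - 2 * sin a" by (rule sol_D(2)[OF sol])
    have rp: "r t > 0" by (rule sol_D(1)[OF sol])
    have "(1 + sin (th t)) / r t - 2 * s = E / (r t)^2 - s" using dth_E[OF rp En[of t]] .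
    moreover have "E / (r t)^2 \<le> 0" using En0 by (simp add: divide_nonpos_nonneg)
    ultimately show "(1 + sin (th t)) / r t - 2 * sin a \<le> - s" by (simp add: s_def)
  qed
  moreover have "(- s) * (X - 0) = - 2 * pi" using sp by (simp add: X_def)
  ultimately have thX: "th X \<le> th 0 - 2 * pi" by linarith
  obtain T where T: "0 \<le> T" "T \<le> X" "th T = th 0 - 2 * pi"
    using IVT2'[of th X "th 0 - 2*pi" 0] thX Xp sol_cont(1)[OF sol] by auto
  have Tp: "T > 0" using T pi_gt_zero by (cases "T = 0") auto
  have "th 0 = th T + 2 * pi" using T(3) by simp
  then have sT: "sin (th T) = sin (th 0)" by simp
  have "r T * (1 + sin (th 0)) - (r T)^2 * s = r 0 * (1 + sin (th 0)) - (r 0)^2 * s"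
    using En[of T] En[of 0] sT by simp
  then have "(r T - r 0) * (1 + sin (th 0) - s * (r T + r 0)) = 0"
    by (simp add: algebra_simps power2_eq_square)
  moreover have "1 + sin (th 0) - s * (r T + r 0) \<noteq> 0"
  proof
    assume h: "1 + sin (th 0) - s * (r T + r 0) = 0"
    have "E = r 0 * (1 + sin (th 0)) - (r 0)^2 * s" using En[of 0] by simp
    also have "\<dots> = s * r 0 * r T" using h by (simp add: algebra_simps power2_eq_square)
    finally have "E = s * r 0 * r T" .
    moreover have "s * r 0 * r T > 0" using sp sol_D(1)[OF sol, of T] sol_D(1)[OF sol, of 0] by simp
    ultimately show False using En0 by simp
  qed
  ultimately have rT: "r T = r 0" by simp
  have "th (0 + T) = th 0 + 2 * pi * of_int (-1)" using T(3) by simp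
  then show ?thesis using return_periodic[OF sol Tp, of 0 "-1"] rT by simp
qed

lemma k1: fixes s r S :: real assumes sp: "s > 0" and En: "r * (1 + S) - r^2 * s = 1 / s" and rp: "r > 0" and S1: "S \<le> 1"
  shows "s * r = 1 \<and> S = 1"
proof -
  define x where "x = s * r"
  have "s * (r * (1 + S) - r^2 * s) = s * (1 / s)" using En by simp
  then have e: "x * (1 + S) - x^2 = 1" using sp unfolding x_def by (simp add: algebra_simps power2_eq_square)
  have xp: "x > 0" using rp sp by (simp add: x_def)
  have "x * (1 + S) \<le> x * 2" using xp S1 by (intro mult_left_mono) auto
  then have "(x - 1)^2 \<le> 0" using e by (simp add: power2_eq_square algebra_simps)
  then have sr: "x = 1" by simp
  then have "S = 1" using e by simp
  then show ?thesis using sr by (simp add: x_def)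
qed

lemma case_equil:
  assumes sol: "branch_solution a th r" and s: "sin a > 0"
    and Eq: "branch_energy a (th 0) (r 0) = 1 / sin a"
  shows "periodic_on_cylinder th r"
proof -
  define s where "s = sin a"
  have sp: "s > 0" using s by (simp add: s_def)
  have En: "r t * (1 + sin (th t)) - (r t)^2 * s = 1 / s" for t using sol_En[OF sol] Eq by (simp add: s_def)
  have key: "s * r t = 1 \<and> sin (th t) = 1" for t
    using k1[OF sp En[of t] sol_D(1)[OF sol, of t] sin_le_one[of "th t"]] .
  have "DERIV th t :> 0" for t
  proof -
    have "DERIV th t :> (1 + sin (th t)) / r t - 2 * sin a" by (rule sol_D(2)[OF sol])
    moreover have "(1 + sin (th t)) / r t - 2 * sin a = 0"
    proof -
      have "r t = 1 / s" using key[of t] sp by (simp add: eq_divide_eq mult.commute)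
      then show ?thesis using key[of t] sp by (simp add: s_def)
    qed
    ultimately show ?thesis by simp
  qed
  then have thc: "th t = th 0" for t by (metis DERIV_isconst_all)
  have rc: "r t = r 0" for t
  proof -
    have "s * r t = s * r 0" using key[of t] key[of 0] by simp
    then show ?thesis using sp by simp
  qed
  have "r (t + 1) = r t \<and> th (t + 1) = th t + 2 * pi * of_int 0" for t
    using thc[of "t+1"] thc[of t] rc[of "t+1"] rc[of t] by simp
  then show ?thesis unfolding periodic_on_cylinder_def
    by (intro exI[of _ 1] conjI exI[of _ 0]) auto
qed



lemma cos_neg_J: "pi/2 < x \<Longrightarrow> x < 3*pi/2 \<Longrightarrow> cos x < 0"
proof -
  assume "pi/2 < x" "x < 3*pi/2"
  then have "0 < cos (x - pi)" by (intro cos_gt_zero_pi) auto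
  then show ?thesis by simp
qed

lemma sin_dec_J: "pi/2 \<le> x \<Longrightarrow> x \<le> y \<Longrightarrow> y \<le> 3*pi/2 \<Longrightarrow> sin y \<le> sin x"
proof -
  assume h: "pi/2 \<le> x" "x \<le> y" "y \<le> 3*pi/2"
  have "sin (pi - y) \<le> sin (pi - x)" using h by (subst sin_mono_le_eq) auto
  then show ?thesis by simp
qed

lemma sin_inc_J: "-(pi/2) \<le> x \<Longrightarrow> x \<le> y \<Longrightarrow> y \<le> pi/2 \<Longrightarrow> sin x \<le> sin y"
  by (subst sin_mono_le_eq) auto

lemma eps_bound:
  fixes sg S1 x c :: real
  assumes "sg \<le> x" "x \<le> S1" "x^2 + c^2 = 1" "\<bar>c\<bar> \<le> 1"
  shows "\<bar>c\<bar> \<ge> 1 - max (sg^2) (S1^2)"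
proof -
  have "x^2 \<le> max (sg^2) (S1^2)"
  proof (cases "x \<ge> 0")
    case True
    then have "x^2 \<le> S1^2" using assms by (intro power_mono) auto
    then show ?thesis by simp
  next
    case False
    then have "(-x)^2 \<le> (-sg)^2" using assms by (intro power_mono) auto
    then show ?thesis by simp
  qed
  moreover have "c^2 \<le> \<bar>c\<bar>"
  proof -
    have "\<bar>c\<bar> * \<bar>c\<bar> \<le> 1 * \<bar>c\<bar>" using assms(4) by (intro mult_right_mono) auto
    then show ?thesis by (simp add: power2_eq_square abs_mult_self)
  qed
  ultimately show ?thesis using assms(3) by linarith
qed

lemma eps_pos:
  fixes sg S1 :: real
  assumes "sg^2 < 1" "S1^2 < 1"
  shows "1 - max (sg^2) (S1^2) > 0"
  using assms by simp

context
  fixes a th r s E r0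
  assumes sol: "branch_solution a th r"
    and s_def: "s = sin a" and sp: "s > 0"
    and En: "\<And>t. r t * (1 + sin (th t)) - (r t)^2 * s = E"
    and Ep: "0 < E" and El: "E < 1 / s"
    and J: "\<And>t. -(pi/2) < th t \<and> th t < 3*pi/2"
    and r0_def: "r0 = sqrt (E / s)"
begin

lemma rpos: "r t > 0" by (rule sol_D(1)[OF sol])

lemma dth: "DERIV th t :> E / (r t)^2 - s"
  using sol_D(2)[OF sol, of t] dth_E[OF rpos En[of t]] by (simp add: s_def)

lemma dr: "DERIV r t :> - cos (th t)" by (rule sol_D(3)[OF sol])

lemma r0p: "r0 > 0" using Ep sp by (simp add: r0_def)

lemma r0sq: "r0^2 = E / s" using Ep sp by (simp add: r0_def)

lemma dth_ge: assumes "r t \<le> r1" "r1 \<le> r0" shows "E / (r t)^2 - s \<ge> E / r1^2 - s"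
proof -
  have "(r t)^2 \<le> r1^2" using assms rpos[of t] by (intro power_mono) auto
  moreover have "0 < r1^2 * (r t)^2" using assms rpos[of t] by simp
  ultimately have "E / r1^2 \<le> E / (r t)^2" using Ep rpos[of t] by (intro divide_left_mono) auto
  then show ?thesis by simp
qed

lemma dth_le: assumes "r1 \<le> r t" "r1 > 0" shows "E / (r t)^2 - s \<le> E / r1^2 - s"
proof -
  have "r1^2 \<le> (r t)^2" using assms by (intro power_mono) auto
  then have "E / (r t)^2 \<le> E / r1^2" using Ep assms by (intro divide_left_mono) auto
  then show ?thesis by simp
qed

lemma at_r0: "E / r0^2 - s = 0" using r0sq sp Ep by simp

lemma lt_r0: assumes "r1 < r0" "r1 > 0" shows "E / r1^2 - s > 0"
proof -
  have "r1^2 < r0^2" using assms by (intro power_strict_mono) auto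
  then have "E / r0^2 < E / r1^2" using Ep assms by (intro divide_strict_left_mono) auto
  then show ?thesis using at_r0 by simp
qed

lemma gt_r0: assumes "r0 < r1" shows "E / r1^2 - s < 0"
proof -
  have "r0^2 < r1^2" using assms r0p by (intro power_strict_mono) auto
  moreover have "0 < r1^2 * r0^2" using assms r0p by simp
  ultimately have "E / r1^2 < E / r0^2" using Ep r0p by (intro divide_strict_left_mono) auto
  then show ?thesis using at_r0 by simp
qed

lemma nz: "\<not> (th t = pi/2 \<and> r t = r0)"
proof
  assume h: "th t = pi/2 \<and> r t = r0"
  have "sin (th t) = 1" using h sin_pi_half by metis
  then have "r0 * 2 - r0^2 * s = E" using En[of t] h by simp
  then have "r0 * 2 - E = E" using r0sq sp by simp
  then have "r0 = E" by simp
  then have "E^2 = E / s" using r0sq by simp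
  then have "E * s = 1" using Ep sp by (simp add: power2_eq_square field_simps)
  then show False using El sp by (simp add: field_simps)
qed

lemma rlt: "s * r t < 2"
proof -
  have "s * (r t)^2 = r t * (1 + sin (th t)) - E" using En[of t] mult.commute[of s "(r t)^2"] by linarith
  also have "\<dots> < r t * 2"
  proof -
    have "r t * (1 + sin (th t)) \<le> r t * 2" using rpos[of t] sin_le_one[of "th t"]
      by (intro mult_left_mono) auto
    then show ?thesis using Ep by linarith
  qed
  finally have "r t * (s * r t) < r t * 2" by (simp add: power2_eq_square algebra_simps)
  then show ?thesis using rpos[of t] by simp
qed

definition sg where "sg = -1 + s * E / 2"

lemma sin_lb: "sg \<le> sin (th t)"
proof -
  have "E \<le> r t * (1 + sin (th t))" using En[of t] sp by (smt (verit) zero_le_power2 mult_nonneg_nonneg)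
  moreover have "r t * (1 + sin (th t)) \<le> (2 / s) * (1 + sin (th t))"
  proof (rule mult_right_mono)
    show "r t \<le> 2 / s" using rlt[of t] sp by (simp add: field_simps)
    show "0 \<le> 1 + sin (th t)" using sin_ge_minus_one[of "th t"] by linarith
  qed
  ultimately have "E \<le> (2 / s) * (1 + sin (th t))" by linarith
  then have "s * E \<le> s * ((2 / s) * (1 + sin (th t)))" using sp by (intro mult_left_mono) auto
  then have "s * E \<le> 2 * (1 + sin (th t))" using sp by simp
  then show ?thesis by (simp add: sg_def)
qed

lemma sg_sq: "sg^2 < 1"
proof -
  have "0 < s * E" using sp Ep by simp
  moreover have "s * E < 1" using El sp by (simp add: field_simps)
  ultimately have "-1 < sg" "sg < 1" by (auto simp: sg_def)
  then show ?thesis by (simp add: abs_square_less_1)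
qed


lemma th_up: assumes H: "\<forall>t\<ge>b. r t \<le> r0" and "b \<le> t1" "t1 \<le> t" shows "th t1 \<le> th t"
proof -
  have "th t1 + 0 * (t - t1) \<le> th t"
  proof (rule slope_ge[of t1 t th "\<lambda>x. E / (r x)^2 - s"])
    show "t1 \<le> t" using assms by simp
    fix x assume x: "t1 \<le> x" "x \<le> t"
    show "DERIV th x :> E / (r x)^2 - s" by (rule dth)
    have "E / (r x)^2 - s \<ge> E / r0^2 - s" using H x assms by (intro dth_ge) auto
    then show "0 \<le> E / (r x)^2 - s" using at_r0 by simp
  qed
  then show ?thesis by simp
qed

lemma th_down: assumes H: "\<forall>t\<ge>b. r t \<ge> r0" and "b \<le> t1" "t1 \<le> t" shows "th t \<le> th t1"
proof -
  have "th t \<le> th t1 + 0 * (t - t1)"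
  proof (rule slope_le[of t1 t th "\<lambda>x. E / (r x)^2 - s"])
    show "t1 \<le> t" using assms by simp
    fix x assume x: "t1 \<le> x" "x \<le> t"
    show "DERIV th x :> E / (r x)^2 - s" by (rule dth)
    have "E / (r x)^2 - s \<le> E / r0^2 - s" using H x assms r0p by (intro dth_le) auto
    then show "E / (r x)^2 - s \<le> 0" using at_r0 by simp
  qed
  then show ?thesis by simp
qed

lemma notneg: "\<not> (\<forall>t\<ge>b. r t \<le> r0)"
proof
  assume H: "\<forall>t\<ge>b. r t \<le> r0"
  show False
  proof (cases "\<forall>t\<ge>b. th t \<le> pi/2")
    case True
    have cpos: "t \<ge> b \<Longrightarrow> cos (th t) \<ge> 0" for t using True J[of t] by (intro cos_ge_zero) auto
    have rdec: "b \<le> t1 \<Longrightarrow> t1 \<le> t \<Longrightarrow> r t \<le> r t1" for t1 t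
    proof -
      assume tt: "b \<le> t1" "t1 \<le> t"
      have "r t \<le> r t1 + 0 * (t - t1)"
      proof (rule slope_le[of t1 t r "\<lambda>x. - cos (th x)"])
        show "t1 \<le> t" using tt by simp
        fix x assume "t1 \<le> x" "x \<le> t"
        then show "DERIV r x :> - cos (th x)" "- cos (th x) \<le> 0" using dr cpos[of x] tt by auto
      qed
      then show ?thesis by simp
    qed
    obtain b' where b': "b \<le> b'" "r b' < r0"
    proof (cases "r b < r0")
      case True then show ?thesis using that by auto
    next
      case False
      then have rb: "r b = r0" using H by force
      then have "th b < pi/2" using nz[of b] True by force
      then have "cos (th b) > 0" using J[of b] by (intro cos_gt_zero_pi) auto
      then obtain d where d: "d > 0" "\<forall>h>0. b + h \<in> UNIV \<longrightarrow> h < d \<longrightarrow> r b > r (b + h)"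
        using has_real_derivative_neg_dec_right[OF dr[of b]] by force
      then have "r (b + d/2) < r0" using rb by auto
      then show ?thesis using that[of "b + d/2"] d by auto
    qed
    define k where "k = E / (r b')^2 - s"
    have kp: "k > 0" unfolding k_def using b' rpos[of b'] by (intro lt_r0) auto
    define X where "X = b' + 2 * pi / k"
    have "th b' + k * (X - b') \<le> th X"
    proof (rule slope_ge[of b' X th "\<lambda>x. E / (r x)^2 - s"])
      show "b' \<le> X" using kp by (simp add: X_def)
      fix x assume x: "b' \<le> x" "x \<le> X"
      show "DERIV th x :> E / (r x)^2 - s" by (rule dth)
      show "k \<le> E / (r x)^2 - s" unfolding k_def using rdec[of b' x] x b' by (intro dth_ge) auto
    qed
    moreover have "k * (X - b') = 2 * pi" using kp by (simp add: X_def)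
    ultimately have "th b' + 2 * pi \<le> th X" by linarith
    then show False using J[of b'] J[of X] by linarith
  next
    case False
    then obtain t1 where t1: "t1 \<ge> b" "th t1 > pi/2" by force
    define S1 where "S1 = sin (th t1)"
    have S1sq: "S1^2 < 1"
    proof -
      have "cos (th t1) < 0" using t1 J[of t1] by (intro cos_neg_J) auto
      then have "(cos (th t1))^2 > 0" by simp
      moreover have "(sin (th t1))^2 = 1 - (cos (th t1))^2" using sin_cos_squared_add[of "th t1"] by linarith
      ultimately show ?thesis unfolding S1_def by linarith
    qed
    define ep where "ep = 1 - max (sg^2) (S1^2)"
    have epp: "ep > 0" unfolding ep_def using sg_sq S1sq by (rule eps_pos)
    have "r t1 + ep * ((t1 + r0 / ep) - t1) \<le> r (t1 + r0 / ep)"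
    proof (rule slope_ge[of t1 "t1 + r0/ep" r "\<lambda>x. - cos (th x)"])
      show "t1 \<le> t1 + r0 / ep" using epp r0p by simp
      fix x assume x: "t1 \<le> x" "x \<le> t1 + r0 / ep"
      show "DERIV r x :> - cos (th x)" by (rule dr)
      have thx: "th t1 \<le> th x" using th_up[OF H t1(1) x(1)] .
      have "cos (th x) < 0" using thx t1 J[of x] by (intro cos_neg_J) auto
      moreover have "\<bar>cos (th x)\<bar> \<ge> ep" unfolding ep_def
      proof (rule eps_bound)
        show "sg \<le> sin (th x)" by (rule sin_lb)
        show "sin (th x) \<le> S1" unfolding S1_def using thx t1 J[of x] by (intro sin_dec_J) auto
        show "(sin (th x))^2 + (cos (th x))^2 = 1" by simp
        show "\<bar>cos (th x)\<bar> \<le> 1" by simp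
      qed
      ultimately show "ep \<le> - cos (th x)" by simp
    qed
    then have "r t1 + r0 \<le> r (t1 + r0 / ep)" using epp by simp
    moreover have "r (t1 + r0 / ep) \<le> r0"
    proof -
      have "0 < r0 / ep" using epp r0p by simp
      then show ?thesis using H t1 by simp
    qed
    ultimately show False using rpos[of t1] by linarith
  qed
qed

lemma notpos: "\<not> (\<forall>t\<ge>b. r t \<ge> r0)"
proof
  assume H: "\<forall>t\<ge>b. r t \<ge> r0"
  show False
  proof (cases "\<forall>t\<ge>b. th t \<ge> pi/2")
    case True
    have cneg: "t \<ge> b \<Longrightarrow> cos (th t) \<le> 0" for t
    proof -
      assume "t \<ge> b"
      then have "th t \<ge> pi/2" using True by auto
      then show ?thesis
      proof (cases "th t = pi/2")
        case False
        then show ?thesis using \<open>th t \<ge> pi/2\<close> J[of t] cos_neg_J[of "th t"] by simp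
      next
        case True
        then show ?thesis by (metis cos_pi_half order_refl)
      qed
    qed
    have rinc: "b \<le> t1 \<Longrightarrow> t1 \<le> t \<Longrightarrow> r t1 \<le> r t" for t1 t
    proof -
      assume tt: "b \<le> t1" "t1 \<le> t"
      have "r t1 + 0 * (t - t1) \<le> r t"
      proof (rule slope_ge[of t1 t r "\<lambda>x. - cos (th x)"])
        show "t1 \<le> t" using tt by simp
        fix x assume "t1 \<le> x" "x \<le> t"
        then show "DERIV r x :> - cos (th x)" "0 \<le> - cos (th x)" using dr cneg[of x] tt by auto
      qed
      then show ?thesis by simp
    qed
    obtain b' where b': "b \<le> b'" "r b' > r0"
    proof (cases "r b > r0")
      case True then show ?thesis using that by auto
    next
      case False
      then have rb: "r b = r0" using H by force
      then have "th b > pi/2" using nz[of b] True by force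
      then have "cos (th b) < 0" using J[of b] by (intro cos_neg_J) auto
      then obtain d where d: "d > 0" "\<forall>h>0. b + h \<in> UNIV \<longrightarrow> h < d \<longrightarrow> r b < r (b + h)"
        using has_real_derivative_pos_inc_right[OF dr[of b]] by force
      then have "r (b + d/2) > r0" using rb by auto
      then show ?thesis using that[of "b + d/2"] d by auto
    qed
    define k where "k = E / (r b')^2 - s"
    have kn: "k < 0" unfolding k_def using b' by (intro gt_r0) auto
    define X where "X = b' + 2 * pi / (- k)"
    have "th X \<le> th b' + k * (X - b')"
    proof (rule slope_le[of b' X th "\<lambda>x. E / (r x)^2 - s"])
      show "b' \<le> X" using kn pi_gt_zero by (simp add: X_def divide_nonneg_neg)
      fix x assume x: "b' \<le> x" "x \<le> X"
      show "DERIV th x :> E / (r x)^2 - s" by (rule dth)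
      show "E / (r x)^2 - s \<le> k" unfolding k_def using rinc[of b' x] x b' r0p by (intro dth_le) auto
    qed
    moreover have "k * (X - b') = - 2 * pi" using kn by (simp add: X_def)
    ultimately have "th X \<le> th b' - 2 * pi" by linarith
    then show False using J[of b'] J[of X] by linarith
  next
    case False
    then obtain t1 where t1: "t1 \<ge> b" "th t1 < pi/2" by force
    define S1 where "S1 = sin (th t1)"
    have S1sq: "S1^2 < 1"
    proof -
      have "cos (th t1) > 0" using t1 J[of t1] by (intro cos_gt_zero_pi) auto
      then have "(cos (th t1))^2 > 0" by simp
      moreover have "(sin (th t1))^2 = 1 - (cos (th t1))^2" using sin_cos_squared_add[of "th t1"] by linarith
      ultimately show ?thesis unfolding S1_def by linarith
    qed
    define ep where "ep = 1 - max (sg^2) (S1^2)"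
    have epp: "ep > 0" unfolding ep_def using sg_sq S1sq by (rule eps_pos)
    have "r (t1 + r t1 / ep) \<le> r t1 + (- ep) * ((t1 + r t1 / ep) - t1)"
    proof (rule slope_le[of t1 "t1 + r t1/ep" r "\<lambda>x. - cos (th x)"])
      show "t1 \<le> t1 + r t1 / ep" using epp rpos[of t1] by simp
      fix x assume x: "t1 \<le> x" "x \<le> t1 + r t1 / ep"
      show "DERIV r x :> - cos (th x)" by (rule dr)
      have thx: "th x \<le> th t1" using th_down[OF H t1(1) x(1)] .
      have "cos (th x) > 0" using thx t1 J[of x] by (intro cos_gt_zero_pi) auto
      moreover have "\<bar>cos (th x)\<bar> \<ge> ep" unfolding ep_def
      proof (rule eps_bound)
        show "sg \<le> sin (th x)" by (rule sin_lb)
        show "sin (th x) \<le> S1" unfolding S1_def using thx t1 J[of x] by (intro sin_inc_J) auto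
        show "(sin (th x))^2 + (cos (th x))^2 = 1" by simp
        show "\<bar>cos (th x)\<bar> \<le> 1" by simp
      qed
      ultimately show "- cos (th x) \<le> - ep" by simp
    qed
    then have "r (t1 + r t1 / ep) \<le> 0" using epp by simp
    then show False using rpos[of "t1 + r t1 / ep"] by linarith
  qed
qed

lemma upcross:
  assumes t12: "t1 < t2" and r1: "r t1 < r0" and r2: "r t2 > r0"
  shows "\<exists>t. t1 < t \<and> t < t2 \<and> r t = r0 \<and> th t > pi/2"
proof -
  define Z where "Z = {t1..t2} \<inter> {t. r t = r0}"
  have cr: "continuous_on UNIV r" by (rule sol_cont(2)[OF sol])
  have "closed {t. r t = r0}" using cr by (intro closed_Collect_eq) auto
  then have cZ: "compact Z" unfolding Z_def by (intro compact_Int_closed) auto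
  have "\<exists>x. t1 \<le> x \<and> x \<le> t2 \<and> r x = r0"
    using IVT'[of r t1 r0 t2] r1 r2 t12 continuous_on_subset[OF cr] by force
  then have nZ: "Z \<noteq> {}" unfolding Z_def by auto
  obtain t0 where t0: "t0 \<in> Z" "\<forall>t\<in>Z. t \<le> t0" using compact_attains_sup[OF cZ nZ] by auto
  have t0r: "r t0 = r0" "t1 \<le> t0" "t0 \<le> t2" using t0(1) by (auto simp: Z_def)
  have t0lt: "t0 < t2" using t0r r2 by (cases "t0 = t2") auto
  have t1lt: "t1 < t0" using t0r r1 by (cases "t0 = t1") auto
  have after: "r t > r0" if t: "t0 < t" "t \<le> t2" for t
  proof (rule ccontr)
    assume "\<not> r t > r0"
    then have "r t \<le> r0" by simp
    then obtain x where x: "t \<le> x" "x \<le> t2" "r x = r0"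
      using IVT'[of r t r0 t2] r2 t continuous_on_subset[OF cr] by force
    then have "x \<in> Z" using t t0r by (auto simp: Z_def)
    then show False using t0(2) x t by force
  qed
  have "cos (th t0) \<le> 0"
  proof (rule ccontr)
    assume "\<not> cos (th t0) \<le> 0"
    then have "- cos (th t0) < 0" by simp
    then obtain d where d: "d > 0" "\<forall>h>0. t0 + h \<in> UNIV \<longrightarrow> h < d \<longrightarrow> r t0 > r (t0 + h)"
      using has_real_derivative_neg_dec_right[OF dr[of t0]] by force
    define h where "h = min (d/2) (t2 - t0)"
    have hp: "h > 0" "h < d" "t0 + h \<le> t2" using d t0lt by (auto simp: h_def)
    then have "r (t0 + h) < r0" using d t0r by auto
    moreover have "r (t0 + h) > r0" using after[of "t0 + h"] hp by auto
    ultimately show False by simp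
  qed
  then have "th t0 \<ge> pi/2"
    using J[of t0] cos_gt_zero_pi[of "th t0"] by (cases "th t0 < pi/2") auto
  moreover have "th t0 \<noteq> pi/2" using nz[of t0] t0r by auto
  ultimately show ?thesis using t1lt t0lt t0r by (intro exI[of _ t0]) auto
qed

lemma oval_periodic: "periodic_on_cylinder th r"
proof -
  have np: "\<And>b. \<exists>t\<ge>b. r t < r0" using notpos by (simp add: not_le) 
  have nn: "\<And>b. \<exists>t\<ge>b. r t > r0" using notneg by (simp add: not_le)
  obtain t1 where t1: "r t1 < r0" using np[of 0] by auto
  obtain t2 where t2: "t2 \<ge> t1" "r t2 > r0" using nn[of t1] by auto
  obtain ta where ta: "t1 < ta" "ta < t2" "r ta = r0" "th ta > pi/2"
    using upcross[of t1 t2] t1 t2 by (cases "t1 = t2") auto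
  obtain t3 where t3: "t3 \<ge> t2" "r t3 < r0" using np[of t2] by auto
  obtain t4 where t4: "t4 \<ge> t3" "r t4 > r0" using nn[of t3] by auto
  obtain tb where tb: "t3 < tb" "tb < t4" "r tb = r0" "th tb > pi/2"
    using upcross[of t3 t4] t3 t4 by (cases "t3 = t4") auto
  have ab: "ta < tb" using ta tb t3 by linarith
  have sab: "sin (th ta) = sin (th tb)"
  proof -
    have "r0 * (1 + sin (th ta)) - r0^2 * s = r0 * (1 + sin (th tb)) - r0^2 * s"
      using En[of ta] En[of tb] ta tb by simp
    then have "r0 * (1 + sin (th ta)) = r0 * (1 + sin (th tb))" by simp
    then show ?thesis using r0p by simp
  qed
  have "th ta = th tb"
  proof (rule antisym)
    show "th ta \<le> th tb"
    proof (rule ccontr)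
      assume h: "\<not> th ta \<le> th tb"
      have "sin (pi - th tb) \<le> sin (pi - th ta) \<longleftrightarrow> pi - th tb \<le> pi - th ta"
        using ta tb J[of ta] J[of tb] by (intro sin_mono_le_eq) auto
      then have "\<not> sin (pi - th tb) \<le> sin (pi - th ta)" using h by simp
      then show False using sab by simp
    qed
    show "th tb \<le> th ta"
    proof (rule ccontr)
      assume h: "\<not> th tb \<le> th ta"
      have "sin (pi - th ta) \<le> sin (pi - th tb) \<longleftrightarrow> pi - th ta \<le> pi - th tb"
        using ta tb J[of ta] J[of tb] by (intro sin_mono_le_eq) auto
      then have "\<not> sin (pi - th ta) \<le> sin (pi - th tb)" using h by simp
      then show False using sab by simp
    qed
  qed
  then show ?thesis
    using return_periodic[OF sol, of "tb - ta" ta 0] ab ta tb by simp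
qed

end



lemma k2:
  fixes s r S :: real
  assumes sp: "s > 0" and rp: "r > 0" and S1: "S \<le> 1"
  shows "r * (1 + S) - r^2 * s \<le> 1 / s"
proof -
  define x where "x = s * r"
  have "x * (1 + S) \<le> x * 2" using sp rp S1 unfolding x_def by (intro mult_left_mono) auto
  moreover have "0 \<le> (x - 1)^2" by simp
  ultimately have "x * (1 + S) - x^2 \<le> 1" by (simp add: power2_eq_square algebra_simps)
  then have "s * (r * (1 + S) - r^2 * s) \<le> s * (1 / s)" using sp unfolding x_def
    by (simp add: power2_eq_square algebra_simps)
  then show ?thesis using sp by (simp add: le_divide_eq mult.commute)
qed

lemma periodic_unshift:
  assumes "periodic_on_cylinder (\<lambda>t. th t - 2 * pi * of_int m) r"
  shows "periodic_on_cylinder th r"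
  using assms unfolding periodic_on_cylinder_def by (auto simp: algebra_simps)

lemma case_oval:
  assumes sol: "branch_solution a th r" and s: "sin a > 0"
    and Ep: "0 < branch_energy a (th 0) (r 0)" and El: "branch_energy a (th 0) (r 0) < 1 / sin a"
  shows "periodic_on_cylinder th r"
proof -
  define s where "s = sin a"
  define E where "E = branch_energy a (th 0) (r 0)"
  have sp: "s > 0" using s by (simp add: s_def)
  have En: "r t * (1 + sin (th t)) - (r t)^2 * s = E" for t using sol_En[OF sol] by (simp add: s_def E_def)
  have Ep': "E > 0" and El': "E < 1 / s" using Ep El by (simp_all add: E_def s_def)
  have pos: "1 + sin (th t) > 0" for t
  proof -
    have "r t * (1 + sin (th t)) = E + (r t)^2 * s" using En[of t] by simp
    moreover have "(r t)^2 * s \<ge> 0" using sp by simp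
    ultimately have "r t * (1 + sin (th t)) > 0" using Ep' by linarith
    then show ?thesis using sol_D(1)[OF sol, of t] by (simp add: zero_less_mult_iff)
  qed
  define m where "m = \<lfloor>(th 0 + pi/2) / (2*pi)\<rfloor>"
  define ph where "ph = (\<lambda>t. th t - 2 * pi * of_int m)"
  have solp: "branch_solution a ph r"
    using sol_shift[OF sol, of 0 m] unfolding ph_def by simp
  have sph: "sin (ph t) = sin (th t)" for t unfolding ph_def using sc_shift by simp
  have m1: "of_int m \<le> (th 0 + pi/2) / (2*pi)" unfolding m_def by (rule of_int_floor_le)
  have m2: "(th 0 + pi/2) / (2*pi) < of_int m + 1" unfolding m_def by (rule real_of_int_floor_add_one_gt)
  have ph0: "-(pi/2) \<le> ph 0" "ph 0 < 3*pi/2"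
  proof -
    have "2*pi*of_int m \<le> th 0 + pi/2" using m1 pi_gt_zero by (simp add: field_simps)
    then show "-(pi/2) \<le> ph 0" by (simp add: ph_def)
    have "th 0 + pi/2 < 2*pi*(of_int m + 1)" using m2 pi_gt_zero by (simp add: field_simps)
    then show "ph 0 < 3*pi/2" by (simp add: ph_def algebra_simps)
  qed
  have cph: "continuous_on UNIV ph" by (rule sol_cont(1)[OF solp])
  have sm1: "sin (-(pi/2)) = -1" by simp
  have sm2: "sin (3*pi/2) = -1"
  proof -
    have "sin (3*pi/2) = sin (-(pi/2) + 2*pi)" by (simp add: field_simps)
    also have "\<dots> = -1" by (simp only: sin_periodic) simp
    finally show ?thesis .
  qed
  have J: "-(pi/2) < ph t \<and> ph t < 3*pi/2" for t
  proof (rule ccontr)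
    assume "\<not> (-(pi/2) < ph t \<and> ph t < 3*pi/2)"
    then have "ph t \<le> -(pi/2) \<or> 3*pi/2 \<le> ph t" by linarith
    then obtain y where y: "y = -(pi/2) \<or> y = 3*pi/2" "\<exists>x. ph x = y"
    proof
      assume "ph t \<le> -(pi/2)"
      then show ?thesis using that ivt_any[OF cph, of t "-(pi/2)" 0] ph0 by auto
    next
      assume "3*pi/2 \<le> ph t"
      then show ?thesis using that ivt_any[OF cph, of 0 "3*pi/2" t] ph0 by auto
    qed
    then obtain x where x: "ph x = y" by auto
    have "sin (ph x) = -1"
    proof (cases "y = -(pi/2)")
      case True then show ?thesis using x sm1 by simp
    next
      case False then have "y = 3*pi/2" using y(1) by simp
      then show ?thesis using x sm2 by (simp only:)
    qed
    then show False using pos[of x] sph[of x] by simp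
  qed
  have En2: "r t * (1 + sin (ph t)) - (r t)^2 * s = E" for t using En[of t] sph[of t] by simp
  have "periodic_on_cylinder ph r"
    by (rule oval_periodic[OF solp s_def sp En2 Ep' El' J refl])
  then show ?thesis unfolding ph_def by (rule periodic_unshift)
qed

theorem theorem2:
  fixes \<alpha> :: real and \<theta> \<rho> :: "real \<Rightarrow> real"
  assumes "sin \<alpha> \<noteq> 0"
    and "branch_solution \<alpha> \<theta> \<rho>"
  shows "(\<exists>c. \<forall>t. branch_energy \<alpha> (\<theta> t) (\<rho> t) = c) \<and> periodic_on_cylinder \<theta> \<rho>"
proof
  show "\<exists>c. \<forall>t. branch_energy \<alpha> (\<theta> t) (\<rho> t) = c"
    using energy_const[OF assms(2)] by blast
  define E where "E = branch_energy \<alpha> (\<theta> 0) (\<rho> 0)"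
  show "periodic_on_cylinder \<theta> \<rho>"
  proof (cases "sin \<alpha> < 0")
    case True
    then show ?thesis using case_neg[OF assms(2)] by simp
  next
    case False
    then have sp: "sin \<alpha> > 0" using assms(1) by simp
    show ?thesis
    proof (cases "E \<le> 0")
      case True
      then show ?thesis using case_pos_nonpos[OF assms(2) sp] by (simp add: E_def)
    next
      case False
      have "E \<le> 1 / sin \<alpha>"
        using k2[OF sp sol_D(1)[OF assms(2), of 0] sin_le_one[of "\<theta> 0"]]
        unfolding E_def branch_energy_def by simp
      then consider "E = 1 / sin \<alpha>" | "E < 1 / sin \<alpha>" by linarith
      then show ?thesis
      proof cases
        case 1
        then show ?thesis using case_equil[OF assms(2) sp] by (simp add: E_def)
      next
        case 2
        then show ?thesis using case_oval[OF assms(2) sp] False by (simp add: E_def)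
      qed
    qed
  qed
qed


end
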